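(* Let $\Pi$ be a homogeneous Poisson point process of intensity $\lambda>0$ in $\mathbb{R}^d$, let $S\subseteq\mathbb{R}^d$ be a Borel set with $\mathcal{L}S\in(0,\infty)$, let $r>0$, and let $X$ be a point chosen uniformly at random from $[\Pi]\cap S$ conditionally on $\Pi$ (when non-empty). Let $Z\subseteq\mathbb{R}^d$ be a Borel set of finite Lebesgue measure disjoint from $S$. Then $$\mathbf{P}\big(X\text{ exists and is }r\text{-isolated}\,\big|\,\Pi(Z)=0\big)\ge\mathbf{P}\big(X\text{ exists and is }r\text{-isolated}\big).$$
   Context: $[\Pi]$ denotes the support (set of points) of $\Pi$; $\mathcal{L}$ is Lebesgue measure. A point $x\in[\Pi]$ is called $r$-isolated if no other point of $[\Pi]$ lies within distance $r$ of $x$. *)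

theory Defs
  imports "HOL-Probability.Probability"
begin

text \<open>Point configurations (simple point patterns) in a Euclidean space are represented
  as sets of points.\<close>

definition config_space :: "('a::euclidean_space) set measure" where
  "config_space = sigma UNIV {{P. card (P \<inter> B) = k} | B k. B \<in> sets borel}"

definition poisson_pp :: "'w measure \<Rightarrow> real \<Rightarrow> ('w \<Rightarrow> ('a::euclidean_space) set) \<Rightarrow> bool" where
  "poisson_pp M lam PP \<longleftrightarrow>
     prob_space M \<and>
     PP \<in> measurable M config_space \<and>
     (\<forall>B \<in> sets lborel. emeasure lborel B < \<infinity> \<longrightarrow>
        (AE \<omega> in M. finite (PP \<omega> \<inter> B)) \<and>
        (\<forall>k::nat. measure M {\<omega> \<in> space M. card (PP \<omega> \<inter> B) = k}
            = (lam * measure lborel B) ^ k / fact k * exp (- lam * measure lborel B))) \<and>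
     (\<forall>(I::nat set) (B::nat \<Rightarrow> 'a set). finite I \<longrightarrow>
        (\<forall>i\<in>I. B i \<in> sets lborel \<and> emeasure lborel (B i) < \<infinity>) \<longrightarrow>
        disjoint_family_on B I \<longrightarrow>
        prob_space.indep_vars M (\<lambda>_. count_space UNIV) (\<lambda>i \<omega>. card (PP \<omega> \<inter> B i)) I)"

text \<open>X is a point chosen uniformly at random from PP \<inter> S conditionally on PP (when
  non-empty): X is a random point, lying in PP \<inter> S whenever that set is non-empty, and for
  every measurable set C of configurations and every Borel set A,
  P(PP \<in> C, PP \<inter> S \<noteq> {}, X \<in> A) = E[1_C(PP) * #(PP \<inter> S \<inter> A) / #(PP \<inter> S)].\<close>

definition uniform_selection ::
  "'w measure \<Rightarrow> ('w \<Rightarrow> ('a::euclidean_space) set) \<Rightarrow> 'a set \<Rightarrow> ('w \<Rightarrow> 'a) \<Rightarrow> bool" where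
  "uniform_selection M PP S X \<longleftrightarrow>
     X \<in> borel_measurable M \<and>
     (\<forall>\<omega>\<in>space M. PP \<omega> \<inter> S \<noteq> {} \<longrightarrow> X \<omega> \<in> PP \<omega> \<inter> S) \<and>
     (\<forall>C \<in> sets config_space. \<forall>A \<in> sets borel.
        measure M {\<omega> \<in> space M. PP \<omega> \<in> C \<and> PP \<omega> \<inter> S \<noteq> {} \<and> X \<omega> \<in> A}
        = (\<integral>\<omega>. indicator C (PP \<omega>) * real (card (PP \<omega> \<inter> S \<inter> A)) / real (card (PP \<omega> \<inter> S)) \<partial>M))"

definition r_isolated :: "real \<Rightarrow> ('a::metric_space) set \<Rightarrow> 'a \<Rightarrow> bool" where
  "r_isolated r P x \<longleftrightarrow> x \<in> P \<and> (\<forall>y\<in>P. y \<noteq> x \<longrightarrow> dist x y > r)"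

end

theory Submission
  imports Defs
begin
definition cfgen :: "('a::euclidean_space) set set set" where
  "cfgen = {{Q. \<forall>(B,k)\<in>F. card (Q \<inter> B) = k} | F. finite F \<and>
      (\<forall>(B,k)\<in>F. B \<in> sets borel \<and> emeasure lborel B < \<infinity>)}"

definition cf :: "('a::euclidean_space) set measure" where
  "cf = sigma UNIV cfgen"

lemma sets_cf: "sets cf = sigma_sets UNIV cfgen"
  unfolding cf_def by (rule sets_measure_of) auto

lemma space_cf[simp]: "space cf = UNIV"
  unfolding cf_def by (rule space_measure_of) auto

lemma cfgenI:
  assumes "finite F" "\<And>B k. (B,k) \<in> F \<Longrightarrow> B \<in> sets borel \<and> emeasure lborel B < \<infinity>"
  shows "{Q. \<forall>(B,k)\<in>F. card (Q \<inter> B) = k} \<in> cfgen"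
  unfolding cfgen_def mem_Collect_eq
  by (rule exI[of _ F]) (use assms in auto)

lemma cfgenE:
  assumes "a \<in> cfgen"
  obtains F where "a = {Q. \<forall>(B,k)\<in>F. card (Q \<inter> B) = k}" "finite F"
      "\<And>B k. (B,k) \<in> F \<Longrightarrow> B \<in> sets borel \<and> emeasure lborel B < \<infinity>"
proof -
  have "\<exists>F. a = {Q. \<forall>(B,k)\<in>F. card (Q \<inter> B) = k} \<and> finite F \<and>
      (\<forall>(B,k)\<in>F. B \<in> sets borel \<and> emeasure lborel B < \<infinity>)"
    using assms unfolding cfgen_def mem_Collect_eq .
  then obtain F where F: "a = {Q. \<forall>(B,k)\<in>F. card (Q \<inter> B) = k}" "finite F"
      "\<forall>(B,k)\<in>F. B \<in> sets borel \<and> emeasure lborel B < \<infinity>" by blast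
  show ?thesis
  proof (rule that[OF F(1,2)])
    fix B k assume "(B,k) \<in> F" then show "B \<in> sets borel \<and> emeasure lborel B < \<infinity>"
      using F(3) by auto
  qed
qed

lemma Int_stable_cfgen: "Int_stable (cfgen :: ('a::euclidean_space) set set set)"
  unfolding Int_stable_def
proof (intro ballI)
  fix a b :: "'a set set" assume "a \<in> cfgen" "b \<in> cfgen"
  obtain F where F: "a = {Q. \<forall>(B,k)\<in>F. card (Q \<inter> B) = k}" "finite F"
      "\<And>B k. (B,k) \<in> F \<Longrightarrow> B \<in> sets borel \<and> emeasure lborel B < \<infinity>"
    using \<open>a \<in> cfgen\<close> by (rule cfgenE) blast
  obtain G where G: "b = {Q. \<forall>(B,k)\<in>G. card (Q \<inter> B) = k}" "finite G"
      "\<And>B k. (B,k) \<in> G \<Longrightarrow> B \<in> sets borel \<and> emeasure lborel B < \<infinity>"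
    using \<open>b \<in> cfgen\<close> by (rule cfgenE) blast
  have "a \<inter> b = {Q. \<forall>(B,k)\<in>F \<union> G. card (Q \<inter> B) = k}"
    unfolding F(1) G(1) ball_Un by (rule Collect_conj_eq[symmetric])
  also have "\<dots> \<in> cfgen" 
    by (rule cfgenI) (use F(2,3) G(2,3) in auto)
  finally show "a \<inter> b \<in> cfgen" .
qed

lemma cf_basic:
  assumes "B \<in> sets borel" "emeasure lborel B < \<infinity>"
  shows "{Q. card (Q \<inter> B) = k} \<in> sets cf"
proof -
  have "{Q. card (Q \<inter> B) = k} = {Q. \<forall>(B',k')\<in>{(B,k)}. card (Q \<inter> B') = k'}" by auto
  also have "\<dots> \<in> cfgen" using assms by (intro cfgenI) auto
  finally show ?thesis unfolding sets_cf by blast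
qed

lemma cf_card_measurable:
  assumes "B \<in> sets borel" "emeasure lborel B < \<infinity>"
  shows "(\<lambda>Q. card (Q \<inter> B)) \<in> measurable cf (count_space UNIV)"
proof (subst measurable_count_space_eq2_countable, safe)
  fix k :: nat
  have "(\<lambda>Q. card (Q \<inter> B)) -` {k} \<inter> space cf = {Q. card (Q \<inter> B) = k}" by auto
  then show "(\<lambda>Q. card (Q \<inter> B)) -` {k} \<inter> space cf \<in> sets cf" using cf_basic[OF assms] by simp
qed auto

lemma sets_config_space: "sets config_space = sigma_sets UNIV {{P. card (P \<inter> B) = k} | B k. B \<in> sets borel}"
  unfolding config_space_def by (rule sets_measure_of) auto

lemma space_config_space[simp]: "space config_space = UNIV"
  unfolding config_space_def by (rule space_measure_of) auto

lemma config_basic: "B \<in> sets borel \<Longrightarrow> {P. card (P \<inter> B) = k} \<in> sets config_space"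
  unfolding sets_config_space by blast

lemma config_card_measurable:
  assumes "B \<in> sets borel"
  shows "(\<lambda>Q. card (Q \<inter> B)) \<in> measurable config_space (count_space UNIV)"
proof (subst measurable_count_space_eq2_countable, safe)
  fix k :: nat
  have "(\<lambda>Q. card (Q \<inter> B)) -` {k} \<inter> space config_space = {Q. card (Q \<inter> B) = k}" by auto
  then show "(\<lambda>Q. card (Q \<inter> B)) -` {k} \<inter> space config_space \<in> sets config_space"
    using config_basic[OF assms] by simp
qed auto

lemma minus_measurable:
  fixes Z :: "'a::euclidean_space set"
  assumes "Z \<in> sets borel"
  shows "(\<lambda>P. P - Z) \<in> measurable config_space cf"
  unfolding cf_def
proof (rule measurable_measure_of)
  fix y :: "'a set set" assume "y \<in> cfgen"
  then obtain F where F: "y = {Q. \<forall>(B,k)\<in>F. card (Q \<inter> B) = k}" "finite F"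
      "\<And>B k. (B,k) \<in> F \<Longrightarrow> B \<in> sets borel \<and> emeasure lborel B < \<infinity>"
    by (rule cfgenE) blast
  have eq: "\<And>P B. (P - Z) \<inter> B = P \<inter> (B - Z)" by blast
  have "(\<lambda>P. P - Z) -` y \<inter> space config_space = {P. \<forall>(B,k)\<in>F. card (P \<inter> (B - Z)) = k}"
    by (simp add: F(1) eq)
  also have "\<dots> = (\<Inter>(B,k)\<in>F. {P. card (P \<inter> (B - Z)) = k}) \<inter> space config_space"
    by auto
  also have "\<dots> \<in> sets config_space"
  proof (cases "F = {}")
    case True then show ?thesis using sets.top[of config_space] by simp
  next
    case False
    show ?thesis
      using F(2,3) False
      by (intro sets.Int sets.top sets.finite_INT) (auto intro!: config_basic assms)
  qed
  finally show "(\<lambda>P. P - Z) -` y \<inter> space config_space \<in> sets config_space" .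
qed auto

locale ppp =
  fixes M :: "'w measure" and lam :: real and PP :: "'w \<Rightarrow> ('a::euclidean_space) set"
  assumes pp: "poisson_pp M lam PP"
begin

sublocale prob_space M using pp unfolding poisson_pp_def by blast

lemma PP_meas: "PP \<in> measurable M config_space"
  using pp unfolding poisson_pp_def by blast

lemma count_meas[measurable]:
  "B \<in> sets borel \<Longrightarrow> (\<lambda>\<omega>. card (PP \<omega> \<inter> B)) \<in> measurable M (count_space UNIV)"
  using measurable_comp[OF PP_meas config_card_measurable[of B]] by (simp add: comp_def)

lemma count_sets:
  assumes "B \<in> sets borel"
  shows "{\<omega> \<in> space M. P (card (PP \<omega> \<inter> B))} \<in> sets M"
proof -
  have "{\<omega> \<in> space M. P (card (PP \<omega> \<inter> B))} = (\<lambda>\<omega>. card (PP \<omega> \<inter> B)) -` {k. P k} \<inter> space M" by auto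
  also have "\<dots> \<in> sets M" using measurable_sets[OF count_meas[OF assms], of "{k. P k}"] by simp
  finally show ?thesis .
qed

lemma fin_AE:
  assumes "B \<in> sets borel" "emeasure lborel B < \<infinity>"
  shows "AE \<omega> in M. finite (PP \<omega> \<inter> B)"
  using pp assms unfolding poisson_pp_def by auto

lemma prob_count:
  assumes "B \<in> sets borel" "emeasure lborel B < \<infinity>"
  shows "prob {\<omega> \<in> space M. card (PP \<omega> \<inter> B) = k}
     = (lam * measure lborel B) ^ k / fact k * exp (- lam * measure lborel B)"
  using pp assms unfolding poisson_pp_def by auto

lemma indep_counts:
  fixes I :: "nat set" and B :: "nat \<Rightarrow> 'a set"
  assumes "finite I" "\<And>i. i \<in> I \<Longrightarrow> B i \<in> sets borel \<and> emeasure lborel (B i) < \<infinity>"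
    "disjoint_family_on B I"
  shows "indep_vars (\<lambda>_. count_space UNIV) (\<lambda>i \<omega>. card (PP \<omega> \<inter> B i)) I"
proof -
  have H: "\<forall>(I::nat set) (B::nat \<Rightarrow> 'a set). finite I \<longrightarrow>
        (\<forall>i\<in>I. B i \<in> sets lborel \<and> emeasure lborel (B i) < \<infinity>) \<longrightarrow>
        disjoint_family_on B I \<longrightarrow>
        indep_vars (\<lambda>_. count_space UNIV) (\<lambda>i \<omega>. card (PP \<omega> \<inter> B i)) I"
    using pp unfolding poisson_pp_def by blast
  show ?thesis using H[rule_format, of I B] assms by simp
qed

end

context ppp begin

lemma gen_indep:
  fixes F :: "('a set \<times> nat) set" and Z :: "'a set" and K :: "nat set"
  assumes F: "finite F" "\<And>B k. (B,k) \<in> F \<Longrightarrow> B \<in> sets borel \<and> emeasure lborel B < \<infinity> \<and> B \<inter> Z = {}"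
    and Z: "Z \<in> sets borel" "emeasure lborel Z < \<infinity>"
  shows "prob ({\<omega>\<in>space M. \<forall>(B,k)\<in>F. card (PP \<omega> \<inter> B) = k} \<inter> {\<omega>\<in>space M. card (PP \<omega> \<inter> Z) \<in> K})
       = prob {\<omega>\<in>space M. \<forall>(B,k)\<in>F. card (PP \<omega> \<inter> B) = k} * prob {\<omega>\<in>space M. card (PP \<omega> \<inter> Z) \<in> K}"
proof -
  define BB where "BB = fst ` F"
  define atom where "atom T = \<Inter>T - \<Union>(BB - T)" for T :: "'a set set"
  define AA where "AA = atom ` (Pow BB - {{}})"
  have finBB: "finite BB" unfolding BB_def using F(1) by simp
  have finAA: "finite AA" unfolding AA_def using finBB by simp
  have BBp: "B \<in> sets borel \<and> emeasure lborel B < \<infinity> \<and> B \<inter> Z = {}" if "B \<in> BB" for B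
    using that F(2) unfolding BB_def by force
  have mem_atom: "x \<in> atom T \<longleftrightarrow> (\<forall>B\<in>T. x \<in> B) \<and> (\<forall>B\<in>BB - T. x \<notin> B)" for x T
    unfolding atom_def by auto
  have AAp: "a \<in> sets borel \<and> emeasure lborel a < \<infinity> \<and> a \<inter> Z = {}" if "a \<in> AA" for a
  proof -
    obtain T where T: "T \<subseteq> BB" "T \<noteq> {}" "a = atom T" using \<open>a \<in> AA\<close> unfolding AA_def by blast
    then obtain B where B: "B \<in> T" by blast
    have sub: "a \<subseteq> B" using T B mem_atom by blast
    have finT: "finite T" using T finBB finite_subset by blast
    have "\<Inter>T \<in> sets borel"
    proof -
      have "\<Inter>T = (\<Inter>B\<in>T. B)" by simp
      also have "\<dots> \<in> sets borel" using finT T BBp by (intro sets.finite_INT) auto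
      finally show ?thesis .
    qed
    moreover have "\<Union>(BB - T) \<in> sets borel"
      using finBB BBp by (intro sets.finite_Union) auto
    ultimately have "a \<in> sets borel" unfolding T(3) atom_def by blast
    moreover have "emeasure lborel a < \<infinity>"
    proof -
      have "emeasure lborel a \<le> emeasure lborel B"
        using sub BBp[of B] T B by (intro emeasure_mono) auto
      moreover have "B \<in> BB" using T B by blast
      ultimately show ?thesis using BBp[of B] by (meson order.strict_trans1)
    qed
    moreover have "a \<inter> Z = {}" using sub BBp[of B] T B by blast
    ultimately show ?thesis by blast
  qed
  have disjAA: "a \<inter> a' = {}" if "a \<in> AA" "a' \<in> AA" "a \<noteq> a'" for a a'
  proof (rule ccontr)
    assume "a \<inter> a' \<noteq> {}"
    then obtain x where x: "x \<in> a" "x \<in> a'" by blast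
    obtain T where T: "T \<subseteq> BB" "a = atom T" using \<open>a \<in> AA\<close> unfolding AA_def by blast
    obtain T' where T': "T' \<subseteq> BB" "a' = atom T'" using \<open>a' \<in> AA\<close> unfolding AA_def by blast
    have "T = {B\<in>BB. x \<in> B}" using x(1) T mem_atom by blast
    moreover have "T' = {B\<in>BB. x \<in> B}" using x(2) T' mem_atom by blast
    ultimately show False using T T' \<open>a \<noteq> a'\<close> by simp
  qed
  have coverAA: "\<exists>a\<in>AA. x \<in> a \<and> a \<subseteq> B" if "B \<in> BB" "x \<in> B" for B x
  proof -
    define T where "T = {B\<in>BB. x \<in> B}"
    have "T \<in> Pow BB - {{}}" using that unfolding T_def by auto
    moreover have "x \<in> atom T" unfolding mem_atom T_def by auto
    moreover have "atom T \<subseteq> B" using that unfolding T_def by (auto simp: mem_atom)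
    ultimately show ?thesis unfolding AA_def by blast
  qed
  define n where "n = card AA"
  obtain e where e: "bij_betw e {0..<n} AA" unfolding n_def using ex_bij_betw_nat_finite[OF finAA] by blast
  define Bf where "Bf i = (if i < n then e i else Z)" for i
  define c where "c i \<omega> = card (PP \<omega> \<inter> Bf i)" for i \<omega>
  have e_in: "e i \<in> AA" if "i < n" for i using e that unfolding bij_betw_def by auto
  have e_inj: "e i \<noteq> e j" if "i < n" "j < n" "i \<noteq> j" for i j
    using e that unfolding bij_betw_def inj_on_def by auto
  have Bfp: "Bf i \<in> sets borel \<and> emeasure lborel (Bf i) < \<infinity>" for i
    using AAp[OF e_in, of i] Z unfolding Bf_def by auto
  have disjBf: "disjoint_family_on Bf {0..n}"
    unfolding disjoint_family_on_def
  proof (intro ballI impI)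
    fix i j assume ij: "i \<in> {0..n}" "j \<in> {0..n}" "i \<noteq> j"
    show "Bf i \<inter> Bf j = {}"
    proof (cases "i < n \<and> j < n")
      case True then show ?thesis using disjAA[OF e_in e_in e_inj] ij unfolding Bf_def by auto
    next
      case False
      then have "(i = n \<and> j < n) \<or> (j = n \<and> i < n)" using ij by auto
      then show ?thesis using AAp[OF e_in] unfolding Bf_def by auto
    qed
  qed
  have indep: "indep_vars (\<lambda>_. count_space UNIV) c {0..n}"
    unfolding c_def by (rule indep_counts) (use Bfp disjBf in auto)
  define IB where "IB B = {i\<in>{0..<n}. e i \<subseteq> B}" for B
  have decomp: "card (PP \<omega> \<inter> B) = (\<Sum>i\<in>IB B. c i \<omega>)" if hB: "B \<in> BB" and hfin: "finite (PP \<omega> \<inter> B)" for \<omega> B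
  proof -
    have "PP \<omega> \<inter> B = (\<Union>i\<in>IB B. PP \<omega> \<inter> e i)"
    proof
      show "PP \<omega> \<inter> B \<subseteq> (\<Union>i\<in>IB B. PP \<omega> \<inter> e i)"
      proof
        fix x assume x: "x \<in> PP \<omega> \<inter> B"
        then obtain a where a: "a \<in> AA" "x \<in> a" "a \<subseteq> B" using coverAA[OF hB] by blast
        then obtain i where "i \<in> {0..<n}" "e i = a" using e unfolding bij_betw_def by force
        then show "x \<in> (\<Union>i\<in>IB B. PP \<omega> \<inter> e i)" using a x unfolding IB_def by blast
      qed
    qed (auto simp: IB_def)
    also have "card \<dots> = (\<Sum>i\<in>IB B. card (PP \<omega> \<inter> e i))"
    proof (rule card_UN_disjoint)
      show "finite (IB B)" unfolding IB_def by simp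
      show "\<forall>i\<in>IB B. finite (PP \<omega> \<inter> e i)"
        using hfin unfolding IB_def by (metis (no_types, lifting) Int_mono finite_subset mem_Collect_eq subset_refl)
      show "\<forall>i\<in>IB B. \<forall>j\<in>IB B. i \<noteq> j \<longrightarrow> PP \<omega> \<inter> e i \<inter> (PP \<omega> \<inter> e j) = {}"
        using disjAA[OF e_in e_in e_inj] unfolding IB_def by fastforce
    qed
    also have "\<dots> = (\<Sum>i\<in>IB B. c i \<omega>)"
      unfolding c_def Bf_def IB_def by (intro sum.cong) auto
    finally show ?thesis .
  qed
  define E where "E = {\<omega>\<in>space M. \<forall>(B,k)\<in>F. card (PP \<omega> \<inter> B) = k}"
  define E' where "E' = {\<omega>\<in>space M. \<forall>(B,k)\<in>F. (\<Sum>i\<in>IB B. c i \<omega>) = k}"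
  define W where "W = {\<omega>\<in>space M. card (PP \<omega> \<inter> Z) \<in> K}"
  have AEfin: "AE \<omega> in M. \<forall>B\<in>BB. finite (PP \<omega> \<inter> B)"
    using finBB by (intro AE_finite_allI fin_AE) (auto dest: BBp)
  have BBF: "B \<in> BB" if "(B,k) \<in> F" for B k using that unfolding BB_def by force
  have AEeq: "AE \<omega> in M. \<omega> \<in> E \<longleftrightarrow> \<omega> \<in> E'"
    using AEfin
  proof eventually_elim
    case (elim \<omega>)
    then have "card (PP \<omega> \<inter> B) = (\<Sum>i\<in>IB B. c i \<omega>)" if "(B,k) \<in> F" for B k
      using decomp BBF that by blast
    then show ?case unfolding E_def E'_def by auto
  qed
  have c_meas: "c i \<in> measurable M (count_space UNIV)" for i
    unfolding c_def using Bfp by (intro count_meas) auto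
  have E_sets: "E \<in> events"
  proof -
    have "{\<omega>\<in>space M. \<forall>p\<in>F. (case p of (B,k) \<Rightarrow> card (PP \<omega> \<inter> B) = k)} \<in> events"
    proof (rule sets.sets_Collect_finite_All[OF _ F(1)])
      fix p assume "p \<in> F"
      then obtain B k where p: "p = (B,k)" "(B,k) \<in> F" by (cases p) auto
      show "{\<omega>\<in>space M. case p of (B,k) \<Rightarrow> card (PP \<omega> \<inter> B) = k} \<in> events"
        unfolding p(1) using count_sets[of B "\<lambda>j. j = k"] F(2)[OF p(2)] by simp
    qed
    then show ?thesis unfolding E_def by simp
  qed
  have W_sets: "W \<in> events" unfolding W_def using count_sets[OF Z(1)] by simp
  define EE where "EE i = {c i -` A \<inter> space M | A. A \<in> sets (count_space (UNIV::nat set))}" for i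
  have indepEE: "indep_sets EE {0..n}" using indep unfolding indep_vars_def2 EE_def by blast
  define II where "II b = (if b then {0..<n} else {n})" for b :: bool
  have indep2: "indep_sets (\<lambda>b. sigma_sets (space M) (\<Union>i\<in>II b. EE i)) UNIV"
  proof (rule indep_sets_collect_sigma)
    have "(\<Union>j\<in>UNIV. II j) = {0..n}" unfolding II_def by (auto simp: UNIV_bool)
    then show "indep_sets EE (\<Union>j\<in>UNIV. II j)" using indepEE by simp
    show "Int_stable (EE i)" for i
      unfolding Int_stable_def EE_def
      apply (auto)
      apply (rule_tac x="A \<inter> Aa" in exI)
      apply auto
      done
    show "disjoint_family_on II UNIV"
      unfolding disjoint_family_on_def II_def by auto
  qed
  define M' where "M' = sigma (space M) (\<Union>i\<in>{0..<n}. EE i)"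
  have EEsub: "(\<Union>i\<in>{0..<n}. EE i) \<subseteq> Pow (space M)" unfolding EE_def by auto
  have sets_M': "sets M' = sigma_sets (space M) (\<Union>i\<in>{0..<n}. EE i)"
    unfolding M'_def using EEsub by (rule sets_measure_of)
  have space_M': "space M' = space M"
    unfolding M'_def using EEsub by (rule space_measure_of)
  have c_meas': "c i \<in> measurable M' (count_space UNIV)" if "i < n" for i
  proof (subst measurable_count_space_eq2_countable, safe)
    fix k :: nat
    have "c i -` {k} \<inter> space M' \<in> EE i" unfolding EE_def space_M' mem_Collect_eq
      by (rule exI[of _ "{k}"]) simp
    then have "c i -` {k} \<inter> space M' \<in> (\<Union>i\<in>{0..<n}. EE i)"
      using that by (intro UN_I[of i]) auto
    then show "c i -` {k} \<inter> space M' \<in> sets M'" unfolding sets_M' by (rule sigma_sets.Basic)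
  next
    fix x assume "x \<in> space M'" show "c i x \<in> UNIV" by simp
  qed
  have E'_sets: "E' \<in> sigma_sets (space M) (\<Union>i\<in>II True. EE i)"
  proof -
    have rm: "(\<lambda>\<omega>. real (c i \<omega>)) \<in> borel_measurable M'" if "i < n" for i
      using measurable_compose[OF c_meas'[OF that] borel_measurable_count_space[of real UNIV]] by simp
    have "{\<omega>\<in>space M'. \<forall>p\<in>F. (case p of (B,k) \<Rightarrow> (\<Sum>i\<in>IB B. real (c i \<omega>)) = real k)} \<in> sets M'"
    proof (rule sets.sets_Collect_finite_All[OF _ F(1)])
      fix p assume "p \<in> F"
      then obtain B k where p: "p = (B,k)" by (cases p) auto
      have fm: "(\<lambda>\<omega>. \<Sum>i\<in>IB B. real (c i \<omega>)) \<in> borel_measurable M'"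
        by (rule borel_measurable_sum) (use rm in \<open>auto simp: IB_def\<close>)
      have "{\<omega>\<in>space M'. case p of (B,k) \<Rightarrow> (\<Sum>i\<in>IB B. real (c i \<omega>)) = real k}
          = (\<lambda>\<omega>. \<Sum>i\<in>IB B. real (c i \<omega>)) -` {real k} \<inter> space M'" unfolding p by auto
      also have "\<dots> \<in> sets M'" by (rule measurable_sets[OF fm]) (simp add: borel_closed)
      finally show "{\<omega>\<in>space M'. case p of (B,k) \<Rightarrow> (\<Sum>i\<in>IB B. real (c i \<omega>)) = real k} \<in> sets M'" .
    qed
    moreover have "{\<omega>\<in>space M'. \<forall>p\<in>F. (case p of (B,k) \<Rightarrow> (\<Sum>i\<in>IB B. real (c i \<omega>)) = real k)} = E'"
      unfolding E'_def space_M' by (auto simp flip: of_nat_sum)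
    ultimately show ?thesis unfolding sets_M' II_def by simp
  qed
  have W_in: "W \<in> sigma_sets (space M) (\<Union>i\<in>II False. EE i)"
  proof -
    have "W = c n -` K \<inter> space M" unfolding W_def c_def Bf_def by auto
    then have "W \<in> EE n" unfolding EE_def by auto
    then show ?thesis unfolding II_def by auto
  qed
  have E'_ev: "E' \<in> events" using E'_sets indep2 unfolding indep_sets_def by blast
  have "prob (E' \<inter> W) = prob E' * prob W"
  proof -
    have "prob (\<Inter>b\<in>UNIV. (if b then E' else W)) = (\<Prod>b\<in>UNIV. prob (if b then E' else W))"
      by (rule indep_setsD[OF indep2]) (use E'_sets W_in in \<open>auto split: if_splits\<close>)
    then show ?thesis by (simp add: UNIV_bool Int_commute)
  qed
  moreover have "prob (E \<inter> W) = prob (E' \<inter> W)"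
    using AEeq E_sets E'_ev W_sets by (intro measure_eq_AE) auto
  moreover have "prob E = prob E'"
    using AEeq E_sets E'_ev by (intro measure_eq_AE) auto
  ultimately show ?thesis unfolding E_def W_def by simp
qed

end

context ppp begin

lemma Y_meas: "Z \<in> sets borel \<Longrightarrow> (\<lambda>\<omega>. PP \<omega> - Z) \<in> measurable M cf"
  using measurable_comp[OF PP_meas minus_measurable[of Z]] by (simp add: comp_def)

lemma Y_indep:
  assumes Z: "Z \<in> sets borel" "emeasure lborel Z < \<infinity>"
  shows "indep_set (sigma_sets (space M) {(\<lambda>\<omega>. PP \<omega> - Z) -` A \<inter> space M | A. A \<in> sets cf})
     (sigma_sets (space M) {(\<lambda>\<omega>. card (PP \<omega> \<inter> Z)) -` A \<inter> space M | A. A \<in> sets (count_space UNIV)})"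
proof -
  define Y where "Y = (\<lambda>\<omega>. PP \<omega> - Z)"
  define cZ where "cZ = (\<lambda>\<omega>. card (PP \<omega> \<inter> Z))"
  have Ym: "Y \<in> measurable M cf" unfolding Y_def using Y_meas[OF Z(1)] .
  have cZm: "cZ \<in> measurable M (count_space UNIV)" unfolding cZ_def using count_meas[OF Z(1)] .
  define G1 where "G1 = {Y -` g \<inter> space M | g. g \<in> cfgen}"
  define G2 where "G2 = {cZ -` A \<inter> space M | A. A \<in> sets (count_space (UNIV::nat set))}"
  have G1sub: "G1 \<subseteq> Pow (space M)" unfolding G1_def by auto
  have s1: "sigma_sets (space M) {Y -` A \<inter> space M | A. A \<in> sets cf} = sigma_sets (space M) G1"
  proof -
    have "{Y -` A \<inter> space M | A. A \<in> sets cf} = sigma_sets (space M) G1"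
      unfolding sets_cf G1_def by (rule sigma_sets_vimage_commute) simp
    then show ?thesis using sigma_sets_sigma_sets_eq[OF G1sub] by simp
  qed
  have Int1: "Int_stable G1"
    unfolding Int_stable_def
  proof (intro ballI)
    fix a b assume "a \<in> G1" "b \<in> G1"
    then obtain g h where gh: "a = Y -` g \<inter> space M" "g \<in> cfgen" "b = Y -` h \<inter> space M" "h \<in> cfgen"
      unfolding G1_def by blast
    have "g \<inter> h \<in> cfgen" using Int_stable_cfgen gh unfolding Int_stable_def by blast
    moreover have "a \<inter> b = Y -` (g \<inter> h) \<inter> space M" using gh by auto
    ultimately show "a \<inter> b \<in> G1" unfolding G1_def by blast
  qed
  have Int2: "Int_stable G2"
    unfolding Int_stable_def G2_def
    apply (auto)
    apply (rule_tac x="A \<inter> Aa" in exI)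
    apply auto
    done
  have ind: "indep_set G1 G2"
    unfolding indep_sets2_eq
  proof (intro conjI ballI)
    show "G1 \<subseteq> events"
    proof
      fix a assume "a \<in> G1"
      then obtain g where g: "a = Y -` g \<inter> space M" "g \<in> cfgen" unfolding G1_def by blast
      have "g \<in> sets cf" using g(2) unfolding sets_cf by blast
      then show "a \<in> events" using measurable_sets[OF Ym] g(1) by simp
    qed
    show "G2 \<subseteq> events" unfolding G2_def using measurable_sets[OF cZm] by blast
    fix a b assume ab: "a \<in> G1" "b \<in> G2"
    obtain g where g: "a = Y -` g \<inter> space M" "g \<in> cfgen"
      using ab(1) unfolding G1_def by blast
    obtain A where A: "b = cZ -` A \<inter> space M"
      using ab(2) unfolding G2_def by blast
    obtain F where F: "g = {Q. \<forall>(B,k)\<in>F. card (Q \<inter> B) = k}" "finite F"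
      "\<And>B k. (B,k) \<in> F \<Longrightarrow> B \<in> sets borel \<and> emeasure lborel B < \<infinity>"
      using g(2) by (rule cfgenE) blast
    define F' where "F' = (\<lambda>p. (fst p - Z, snd p)) ` F"
    have eq: "\<And>P B. (P - Z) \<inter> B = P \<inter> (B - Z)" by blast
    have "a = {\<omega>\<in>space M. \<forall>(B,k)\<in>F. card ((PP \<omega> - Z) \<inter> B) = k}"
      unfolding g(1) F(1) Y_def by auto
    also have "\<dots> = {\<omega>\<in>space M. \<forall>(B,k)\<in>F'. card (PP \<omega> \<inter> B) = k}"
      unfolding F'_def eq by (simp add: case_prod_beta)
    finally have a_eq: "a = {\<omega>\<in>space M. \<forall>(B,k)\<in>F'. card (PP \<omega> \<inter> B) = k}" .
    have b_eq: "b = {\<omega>\<in>space M. card (PP \<omega> \<inter> Z) \<in> A}" unfolding A cZ_def by auto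
    have F'p: "B \<in> sets borel \<and> emeasure lborel B < \<infinity> \<and> B \<inter> Z = {}" if hBk: "(B,k) \<in> F'" for B k
    proof -
      obtain p where p: "p \<in> F" "(B,k) = (fst p - Z, snd p)"
        using hBk unfolding F'_def by (rule imageE)
      obtain B0 k0 where B0: "p = (B0, k0)" by (cases p)
      have B0F: "(B0,k0) \<in> F" using p(1) B0 by simp
      have BB0: "B = B0 - Z" using p(2) B0 by simp
      have "B0 \<in> sets borel" "emeasure lborel B0 < \<infinity>" using F(3)[OF B0F] by auto
      moreover have "emeasure lborel B \<le> emeasure lborel B0"
        unfolding BB0 using \<open>B0 \<in> sets borel\<close> Z(1) by (intro emeasure_mono) auto
      ultimately show ?thesis unfolding BB0 using Z(1) by (auto intro: order.strict_trans1)
    qed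
    have finF': "finite F'" unfolding F'_def using F(2) by simp
    show "prob (a \<inter> b) = prob a * prob b"
      unfolding a_eq b_eq by (rule gen_indep[OF finF' F'p Z])
  qed
  have "indep_set (sigma_sets (space M) G1) (sigma_sets (space M) G2)"
    by (rule indep_set_sigma_sets[OF ind Int1 Int2])
  then show ?thesis
    using s1 by (simp add: Y_def cZ_def G2_def)
qed

lemma indep_set_mono:
  assumes "indep_set A B" "A' \<subseteq> A" "B' \<subseteq> B"
  shows "indep_set A' B'"
  using assms unfolding indep_sets2_eq by blast

lemma indep_real:
  assumes Z: "Z \<in> sets borel" "emeasure lborel Z < \<infinity>"
    and psi: "psi \<in> borel_measurable cf"
  shows "indep_var borel (\<lambda>\<omega>. psi (PP \<omega> - Z)) borel (\<lambda>\<omega>. phi (card (PP \<omega> \<inter> Z)) :: real)"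
proof -
  define Y where "Y = (\<lambda>\<omega>. PP \<omega> - Z)"
  define cZ where "cZ = (\<lambda>\<omega>. card (PP \<omega> \<inter> Z))"
  have Ym: "Y \<in> measurable M cf" unfolding Y_def using Y_meas[OF Z(1)] .
  have cZm: "cZ \<in> measurable M (count_space UNIV)" unfolding cZ_def using count_meas[OF Z(1)] .
  have m1: "(\<lambda>\<omega>. psi (Y \<omega>)) \<in> borel_measurable M" using measurable_compose[OF Ym psi] .
  have m2: "(\<lambda>\<omega>. phi (cZ \<omega>)) \<in> borel_measurable M"
    using measurable_compose[OF cZm borel_measurable_count_space[of phi UNIV]] .
  have sub1: "sigma_sets (space M) {(\<lambda>\<omega>. psi (Y \<omega>)) -` A \<inter> space M | A. A \<in> sets borel}
      \<subseteq> sigma_sets (space M) {Y -` A \<inter> space M | A. A \<in> sets cf}"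
  proof (rule sigma_sets_mono)
    show "{(\<lambda>\<omega>. psi (Y \<omega>)) -` A \<inter> space M | A. A \<in> sets borel}
      \<subseteq> sigma_sets (space M) {Y -` A \<inter> space M | A. A \<in> sets cf}"
    proof
      fix x assume "x \<in> {(\<lambda>\<omega>. psi (Y \<omega>)) -` A \<inter> space M | A. A \<in> sets borel}"
      then obtain A where A: "x = (\<lambda>\<omega>. psi (Y \<omega>)) -` A \<inter> space M" "A \<in> sets borel" by blast
      have "psi -` A \<inter> space cf \<in> sets cf" using measurable_sets[OF psi A(2)] .
      moreover have "x = Y -` (psi -` A \<inter> space cf) \<inter> space M" using A(1) by auto
      ultimately have "x \<in> {Y -` A \<inter> space M | A. A \<in> sets cf}" by blast
      then show "x \<in> sigma_sets (space M) {Y -` A \<inter> space M | A. A \<in> sets cf}" by (rule sigma_sets.Basic)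
    qed
  qed
  have sub2: "sigma_sets (space M) {(\<lambda>\<omega>. phi (cZ \<omega>)) -` A \<inter> space M | A. A \<in> sets borel}
      \<subseteq> sigma_sets (space M) {cZ -` A \<inter> space M | A. A \<in> sets (count_space UNIV)}"
  proof (rule sigma_sets_mono)
    show "{(\<lambda>\<omega>. phi (cZ \<omega>)) -` A \<inter> space M | A. A \<in> sets borel}
      \<subseteq> sigma_sets (space M) {cZ -` A \<inter> space M | A. A \<in> sets (count_space UNIV)}"
    proof
      fix x assume "x \<in> {(\<lambda>\<omega>. phi (cZ \<omega>)) -` A \<inter> space M | A. A \<in> sets borel}"
      then obtain A where A: "x = (\<lambda>\<omega>. phi (cZ \<omega>)) -` A \<inter> space M" by blast
      have xe: "x = cZ -` (phi -` A) \<inter> space M" using A(1) by auto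
      have "x \<in> {cZ -` A \<inter> space M | A. A \<in> sets (count_space UNIV)}"
        unfolding mem_Collect_eq by (rule exI[of _ "phi -` A"]) (simp add: xe)
      then show "x \<in> sigma_sets (space M) {cZ -` A \<inter> space M | A. A \<in> sets (count_space UNIV)}" by (rule sigma_sets.Basic)
    qed
  qed
  have "indep_set (sigma_sets (space M) {Y -` A \<inter> space M | A. A \<in> sets cf})
     (sigma_sets (space M) {cZ -` A \<inter> space M | A. A \<in> sets (count_space UNIV)})"
    using Y_indep[OF Z] unfolding Y_def cZ_def .
  then have "indep_set (sigma_sets (space M) {(\<lambda>\<omega>. psi (Y \<omega>)) -` A \<inter> space M | A. A \<in> sets borel})
     (sigma_sets (space M) {(\<lambda>\<omega>. phi (cZ \<omega>)) -` A \<inter> space M | A. A \<in> sets borel})"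
    using sub1 sub2 by (rule indep_set_mono)
  then show ?thesis unfolding indep_var_eq using m1 m2 by (simp add: Y_def cZ_def)
qed

end

definition locfin :: "('a::euclidean_space) set \<Rightarrow> bool" where
  "locfin Q \<longleftrightarrow> (\<forall>m::nat. finite (Q \<inter> ball 0 (real m)))"

lemma locfin_bounded:
  assumes "locfin Q" "bounded B"
  shows "finite (Q \<inter> B)"
proof -
  obtain R where R: "R > 0" "B \<subseteq> ball 0 R" using bounded_subset_ballD[OF assms(2), of 0] by blast
  obtain m :: nat where m: "R < real m" using reals_Archimedean2 by blast
  have "B \<subseteq> ball 0 (real m)" using R m by auto
  then have "Q \<inter> B \<subseteq> Q \<inter> ball 0 (real m)" by blast
  moreover have "finite (Q \<inter> ball 0 (real m))" using assms(1) unfolding locfin_def by blast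
  ultimately show ?thesis by (rule finite_subset)
qed

lemma small_eps:
  fixes d :: real assumes "d > 0"
  shows "\<exists>n::nat. 1 / real (Suc n) < d"
  using reals_Archimedean[OF assms] by (simp add: inverse_eq_divide)

lemma iso_char:
  assumes "locfin Q" "r \<ge> 0"
  shows "r_isolated r Q x \<longleftrightarrow> x \<in> Q \<and> card (Q \<inter> cball x r) \<le> 1"
proof
  assume h: "r_isolated r Q x"
  then have xQ: "x \<in> Q" unfolding r_isolated_def by blast
  have "Q \<inter> cball x r \<subseteq> {x}" using h unfolding r_isolated_def by (auto simp: dist_commute)
  then have "card (Q \<inter> cball x r) \<le> card {x}" by (intro card_mono) auto
  then show "x \<in> Q \<and> card (Q \<inter> cball x r) \<le> 1" using xQ by simp
next
  assume h: "x \<in> Q \<and> card (Q \<inter> cball x r) \<le> 1"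
  have fin: "finite (Q \<inter> cball x r)" using locfin_bounded[OF assms(1)] by simp
  have xin: "x \<in> Q \<inter> cball x r" using h assms(2) by simp
  have all_eq: "\<forall>a\<in>Q \<inter> cball x r. \<forall>b\<in>Q \<inter> cball x r. a = b"
    using h fin card_le_Suc0_iff_eq[OF fin] by simp
  show "r_isolated r Q x" unfolding r_isolated_def
  proof (intro conjI ballI impI)
    show "x \<in> Q" using h by blast
    fix y assume "y \<in> Q" "y \<noteq> x"
    show "dist x y > r"
    proof (rule ccontr)
      assume "\<not> dist x y > r"
      then have "y \<in> Q \<inter> cball x r" using \<open>y \<in> Q\<close> by simp
      then show False using all_eq xin \<open>y \<noteq> x\<close> by blast
    qed
  qed
qed

lemma D1_char:
  fixes D :: "'a::euclidean_space set"
  assumes D: "\<And>U. open U \<Longrightarrow> U \<noteq> {} \<Longrightarrow> \<exists>y\<in>D. y \<in> U" and Q: "locfin Q"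
  shows "(\<forall>n::nat. \<exists>c\<in>D. card (Q \<inter> ball c (1 / real (Suc n))) \<noteq> 0 \<and> x \<in> ball c (1 / real (Suc n)))
     \<longleftrightarrow> x \<in> Q"
proof
  assume xQ: "x \<in> Q"
  show "\<forall>n::nat. \<exists>c\<in>D. card (Q \<inter> ball c (1 / real (Suc n))) \<noteq> 0 \<and> x \<in> ball c (1 / real (Suc n))"
  proof
    fix n :: nat
    define e where "e = 1 / real (Suc n)"
    have e: "e > 0" unfolding e_def by simp
    obtain c where c: "c \<in> D" "c \<in> ball x e" using D[of "ball x e"] e by auto
    have xc: "x \<in> ball c e" using c by (simp add: dist_commute)
    have "finite (Q \<inter> ball c e)" using locfin_bounded[OF Q] by simp
    moreover have "x \<in> Q \<inter> ball c e" using xQ xc by simp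
    ultimately have "card (Q \<inter> ball c e) \<noteq> 0" by (auto simp: card_eq_0_iff)
    then show "\<exists>c\<in>D. card (Q \<inter> ball c (1 / real (Suc n))) \<noteq> 0 \<and> x \<in> ball c (1 / real (Suc n))"
      using c xc unfolding e_def by blast
  qed
next
  assume h: "\<forall>n::nat. \<exists>c\<in>D. card (Q \<inter> ball c (1 / real (Suc n))) \<noteq> 0 \<and> x \<in> ball c (1 / real (Suc n))"
  show "x \<in> Q"
  proof (rule ccontr)
    assume xQ: "x \<notin> Q"
    have finF: "finite (Q \<inter> cball x 1)" using locfin_bounded[OF Q] by simp
    obtain d where d: "d > 0" "\<And>y. y \<in> Q \<inter> cball x 1 \<Longrightarrow> y \<noteq> x \<Longrightarrow> d \<le> dist x y"
      using finite_set_avoid[OF finF, of x] by blast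
    obtain n :: nat where n: "1 / real (Suc n) < min d 1 / 2"
      using small_eps[of "min d 1 / 2"] d by auto
    define e where "e = 1 / real (Suc n)"
    obtain c where c: "c \<in> D" "card (Q \<inter> ball c e) \<noteq> 0" "x \<in> ball c e" using h unfolding e_def by blast
    obtain y where y: "y \<in> Q" "y \<in> ball c e" using c(2) by (metis card.empty disjoint_iff)
    have "dist x y \<le> dist x c + dist c y" by (rule dist_triangle)
    also have "\<dots> < 2 * e" using c(3) y(2) by (simp add: dist_commute)
    finally have dxy: "dist x y < 2 * e" .
    have "2 * e < min d 1" using n unfolding e_def by simp
    then have "y \<in> Q \<inter> cball x 1" using dxy y(1) by simp
    moreover have "y \<noteq> x" using xQ y(1) by blast
    ultimately have "d \<le> dist x y" using d(2) by blast
    then show False using dxy \<open>2 * e < min d 1\<close> by simp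
  qed
qed

lemma D2_char:
  fixes D :: "'a::euclidean_space set"
  assumes D: "\<And>U. open U \<Longrightarrow> U \<noteq> {} \<Longrightarrow> \<exists>y\<in>D. y \<in> U" and Q: "locfin Q"
  shows "(\<exists>n::nat. \<exists>c\<in>D. card (Q \<inter> ball c (r + 1 / real (Suc n))) \<le> 1 \<and> x \<in> ball c (1 / real (Suc n)))
     \<longleftrightarrow> card (Q \<inter> cball x r) \<le> 1"
proof
  assume "\<exists>n::nat. \<exists>c\<in>D. card (Q \<inter> ball c (r + 1 / real (Suc n))) \<le> 1 \<and> x \<in> ball c (1 / real (Suc n))"
  then obtain n c where c: "c \<in> D" "card (Q \<inter> ball c (r + 1 / real (Suc n))) \<le> 1"
    "x \<in> ball c (1 / real (Suc n))" by blast
  have sub: "cball x r \<subseteq> ball c (r + 1 / real (Suc n))"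
  proof
    fix y assume "y \<in> cball x r"
    then have "dist x y \<le> r" by simp
    moreover have "dist c x < 1 / real (Suc n)" using c(3) by simp
    moreover have "dist c y \<le> dist c x + dist x y" by (rule dist_triangle)
    ultimately show "y \<in> ball c (r + 1 / real (Suc n))" by simp
  qed
  have "finite (Q \<inter> ball c (r + 1 / real (Suc n)))" using locfin_bounded[OF Q] by simp
  then have "card (Q \<inter> cball x r) \<le> card (Q \<inter> ball c (r + 1 / real (Suc n)))"
    using sub by (intro card_mono) auto
  then show "card (Q \<inter> cball x r) \<le> 1" using c(2) by simp
next
  assume h: "card (Q \<inter> cball x r) \<le> 1"
  define G where "G = Q \<inter> cball x (r + 1) - cball x r"
  have finG: "finite G" unfolding G_def using locfin_bounded[OF Q, of "cball x (r+1)"] by simp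
  obtain d where d: "d > 0" "d \<le> 1" "\<And>y. y \<in> G \<Longrightarrow> r + d \<le> dist x y"
  proof (cases "G = {}")
    case True then show ?thesis using that[of 1] by simp
  next
    case False
    define m where "m = Min (dist x ` G)"
    have m_in: "m \<in> dist x ` G" unfolding m_def using finG False by (intro Min_in) auto
    have m_le: "m \<le> dist x y" if "y \<in> G" for y unfolding m_def using finG that by (intro Min_le) auto
    have "m > r" using m_in unfolding G_def by auto
    then show ?thesis using that[of "min 1 (m - r)"] m_le by fastforce
  qed
  obtain n :: nat where n: "1 / real (Suc n) < d / 2" using small_eps[of "d / 2"] d by auto
  define e where "e = 1 / real (Suc n)"
  have e: "e > 0" unfolding e_def by simp
  obtain c where c: "c \<in> D" "c \<in> ball x e" using D[of "ball x e"] e by auto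
  have sub: "Q \<inter> ball c (r + e) \<subseteq> Q \<inter> cball x r"
  proof
    fix y assume y: "y \<in> Q \<inter> ball c (r + e)"
    have "dist x y \<le> dist x c + dist c y" by (rule dist_triangle)
    also have "\<dots> < r + 2 * e" using c(2) y by simp
    finally have dxy: "dist x y < r + 2 * e" .
    have "2 * e < d" using n unfolding e_def by simp
    show "y \<in> Q \<inter> cball x r"
    proof (rule ccontr)
      assume "y \<notin> Q \<inter> cball x r"
      then have "y \<in> G" unfolding G_def using y dxy \<open>2 * e < d\<close> d(2) by auto
      then have "r + d \<le> dist x y" by (rule d(3))
      then show False using dxy \<open>2 * e < d\<close> by simp
    qed
  qed
  have "finite (Q \<inter> cball x r)" using locfin_bounded[OF Q] by simp
  then have "card (Q \<inter> ball c (r + e)) \<le> card (Q \<inter> cball x r)" using sub by (rule card_mono)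
  then have "card (Q \<inter> ball c (r + e)) \<le> 1" using h by simp
  moreover have "x \<in> ball c e" using c(2) by (simp add: dist_commute)
  ultimately show "\<exists>n::nat. \<exists>c\<in>D. card (Q \<inter> ball c (r + 1 / real (Suc n))) \<le> 1 \<and> x \<in> ball c (1 / real (Suc n))"
    using c(1) unfolding e_def by blast
qed

lemma cf_ne0: "B \<in> sets borel \<Longrightarrow> emeasure lborel B < \<infinity> \<Longrightarrow> {Q. card (Q \<inter> B) \<noteq> 0} \<in> sets cf"
proof -
  assume a: "B \<in> sets borel" "emeasure lborel B < \<infinity>"
  have "{Q. card (Q \<inter> B) \<noteq> 0} = space cf - {Q. card (Q \<inter> B) = 0}" by auto
  also have "\<dots> \<in> sets cf" using cf_basic[OF a] by (intro sets.Diff sets.top)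
  finally show ?thesis .
qed

lemma cf_le1: "B \<in> sets borel \<Longrightarrow> emeasure lborel B < \<infinity> \<Longrightarrow> {Q. card (Q \<inter> B) \<le> 1} \<in> sets cf"
proof -
  assume a: "B \<in> sets borel" "emeasure lborel B < \<infinity>"
  have "{Q. card (Q \<inter> B) \<le> 1} = {Q. card (Q \<inter> B) = 0} \<union> {Q. card (Q \<inter> B) = 1}" by auto
  also have "\<dots> \<in> sets cf" using cf_basic[OF a] by (intro sets.Un)
  finally show ?thesis .
qed

lemma iso_set_exists:
  assumes r: "r \<ge> 0"
  shows "\<exists>DS. DS \<in> sets (cf \<Otimes>\<^sub>M (borel :: ('a::euclidean_space) measure)) \<and>
     (\<forall>Q x. locfin Q \<longrightarrow> ((Q,x) \<in> DS \<longleftrightarrow> r_isolated r Q x))"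
proof -
  obtain D :: "'a set" where D: "countable D" "\<And>U. open U \<Longrightarrow> U \<noteq> {} \<Longrightarrow> \<exists>y\<in>D. y \<in> U"
    using countable_dense_exists by blast
  define e where "e n = 1 / real (Suc n)" for n :: nat
  define DS1 where "DS1 = (\<Inter>n\<in>UNIV. \<Union>c\<in>D. {Q. card (Q \<inter> ball c (e n)) \<noteq> 0} \<times> ball c (e n))"
  define DS2 where "DS2 = (\<Union>n\<in>UNIV. \<Union>c\<in>D. {Q. card (Q \<inter> ball c (r + e n)) \<le> 1} \<times> ball c (e n))"
  have fb: "emeasure lborel (ball c t) < \<infinity>" for c :: 'a and t by (intro emeasure_bounded_finite) simp
  have top: "UNIV \<in> sets (cf \<Otimes>\<^sub>M (borel :: 'a measure))"
    using sets.top[of "cf \<Otimes>\<^sub>M (borel :: 'a measure)"] by (simp add: space_pair_measure)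
  have s1: "DS1 \<in> sets (cf \<Otimes>\<^sub>M borel)"
    unfolding DS1_def
    by (intro sets.countable_INT'' sets.countable_UN'' pair_measureI cf_ne0 fb top D(1)) auto
  have s2: "DS2 \<in> sets (cf \<Otimes>\<^sub>M borel)"
    unfolding DS2_def
    by (intro sets.countable_UN'' pair_measureI cf_le1 fb D(1)) auto
  have "(Q,x) \<in> DS1 \<inter> DS2 \<longleftrightarrow> r_isolated r Q x" if Q: "locfin Q" for Q x
  proof -
    have "(Q,x) \<in> DS1 \<longleftrightarrow> x \<in> Q"
      using D1_char[OF D(2) Q, of x] unfolding DS1_def e_def by simp
    moreover have "(Q,x) \<in> DS2 \<longleftrightarrow> card (Q \<inter> cball x r) \<le> 1"
      using D2_char[OF D(2) Q, of r x] unfolding DS2_def e_def by simp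
    ultimately show ?thesis using iso_char[OF Q r] by simp
  qed
  moreover have "DS1 \<inter> DS2 \<in> sets (cf \<Otimes>\<^sub>M borel)" using s1 s2 by (rule sets.Int)
  ultimately show ?thesis by blast
qed

lemma (in prob_space) pair_extend:
  assumes P: "P \<in> measurable M (M1 \<Otimes>\<^sub>M M2)" and K1: "K1 \<in> events" and K2: "K2 \<in> events"
    and rect: "\<And>a b. a \<in> sets M1 \<Longrightarrow> b \<in> sets M2 \<Longrightarrow>
        prob (P -` (a \<times> b) \<inter> space M \<inter> K1) = c * prob (P -` (a \<times> b) \<inter> space M \<inter> K2)"
    and E: "E \<in> sets (M1 \<Otimes>\<^sub>M M2)"
  shows "prob (P -` E \<inter> space M \<inter> K1) = c * prob (P -` E \<inter> space M \<inter> K2)"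
proof -
  let ?\<Omega> = "space M1 \<times> space M2"
  let ?G = "{a \<times> b | a b. a \<in> sets M1 \<and> b \<in> sets M2}"
  have Psp: "P \<omega> \<in> ?\<Omega>" if "\<omega> \<in> space M" for \<omega>
    using measurable_space[OF P that] by (simp add: space_pair_measure)
  have Pev: "P -` A \<inter> space M \<in> events" if "A \<in> sigma_sets ?\<Omega> ?G" for A
  proof -
    have "A \<in> sets (M1 \<Otimes>\<^sub>M M2)" unfolding sets_pair_measure using that .
    then show ?thesis by (rule measurable_sets[OF P])
  qed
  have top: "prob (space M \<inter> K1) = c * prob (space M \<inter> K2)"
  proof -
    have e: "P -` (space M1 \<times> space M2) \<inter> space M = space M" using Psp by blast
    have "prob (P -` (space M1 \<times> space M2) \<inter> space M \<inter> K1) = c * prob (P -` (space M1 \<times> space M2) \<inter> space M \<inter> K2)"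
      by (rule rect[OF sets.top[of M1] sets.top[of M2]])
    then show ?thesis unfolding e .
  qed
  have Gsub: "?G \<subseteq> Pow ?\<Omega>"
  proof
    fix x assume "x \<in> ?G"
    then obtain a b where ab: "x = a \<times> b" "a \<in> sets M1" "b \<in> sets M2" by blast
    show "x \<in> Pow ?\<Omega>" using sets.sets_into_space[OF ab(2)] sets.sets_into_space[OF ab(3)] ab(1) by auto
  qed
  have Emem: "E \<in> sigma_sets ?\<Omega> ?G" using E unfolding sets_pair_measure .
  from Int_stable_pair_measure_generator[of M1 M2] Gsub Emem show ?thesis
  proof (induct rule: sigma_sets_induct_disjoint)
    case (basic A)
    then show ?case using rect by blast
  next
    case empty
    then show ?case by simp
  next
    case (compl A)
    have eq: "P -` (?\<Omega> - A) \<inter> space M \<inter> K = (space M \<inter> K) - (P -` A \<inter> space M \<inter> K)" for K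
      using Psp by auto
    have D: "prob (P -` (?\<Omega> - A) \<inter> space M \<inter> K) = prob (space M \<inter> K) - prob (P -` A \<inter> space M \<inter> K)"
      if "K \<in> events" for K
      unfolding eq using Pev[OF compl(1)] that by (intro finite_measure_Diff) auto
    have "prob (P -` (?\<Omega> - A) \<inter> space M \<inter> K1) = prob (space M \<inter> K1) - prob (P -` A \<inter> space M \<inter> K1)"
      by (rule D[OF K1])
    also have "\<dots> = c * prob (space M \<inter> K2) - c * prob (P -` A \<inter> space M \<inter> K2)"
      using top compl(2) by simp
    also have "\<dots> = c * (prob (space M \<inter> K2) - prob (P -` A \<inter> space M \<inter> K2))"
      by (simp add: right_diff_distrib)
    also have "\<dots> = c * prob (P -` (?\<Omega> - A) \<inter> space M \<inter> K2)"
      using D[OF K2] by simp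
    finally show ?case .
  next
    case (union A)
    have eq: "P -` (\<Union>i. A i) \<inter> space M \<inter> K = (\<Union>i. P -` A i \<inter> space M \<inter> K)" for K by auto
    have sm: "(\<lambda>i. prob (P -` A i \<inter> space M \<inter> K)) sums prob (P -` (\<Union>i. A i) \<inter> space M \<inter> K)"
      if "K \<in> events" for K
      unfolding eq
    proof (rule finite_measure_UNION)
      show "range (\<lambda>i. P -` A i \<inter> space M \<inter> K) \<subseteq> events" using Pev union(2) that by auto
      show "disjoint_family (\<lambda>i. P -` A i \<inter> space M \<inter> K)"
        using union(1) unfolding disjoint_family_on_def by blast
    qed
    have "(\<lambda>i. c * prob (P -` A i \<inter> space M \<inter> K2)) sums (c * prob (P -` (\<Union>i. A i) \<inter> space M \<inter> K2))"
      using sm[OF K2] by (rule sums_mult)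
    moreover have "(\<lambda>i. c * prob (P -` A i \<inter> space M \<inter> K2)) = (\<lambda>i. prob (P -` A i \<inter> space M \<inter> K1))"
      using union(3) by simp
    ultimately show ?case using sm[OF K1] sums_unique2 by metis
  qed
qed

lemma ratio_le1:
  fixes Q S A :: "'a set"
  shows "real (card (Q \<inter> (S \<inter> A))) / real (card (Q \<inter> S)) \<le> 1"
proof (cases "finite (Q \<inter> S)")
  case True
  then have "card (Q \<inter> (S \<inter> A)) \<le> card (Q \<inter> S)" by (intro card_mono) auto
  then show ?thesis by (cases "card (Q \<inter> S) = 0") auto
next
  case False then show ?thesis by simp
qed

context ppp begin

lemma AE_locfin: "AE \<omega> in M. locfin (PP \<omega>)"
  unfolding locfin_def AE_all_countable
proof
  fix m :: nat
  show "AE \<omega> in M. finite (PP \<omega> \<inter> ball 0 (real m))"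
    by (rule fin_AE[OF borel_open[OF open_ball] emeasure_bounded_finite[OF bounded_ball]])
qed

lemma probN:
  assumes "Z \<in> sets borel" "emeasure lborel Z < \<infinity>"
  shows "prob {\<omega> \<in> space M. card (PP \<omega> \<inter> Z) = 0} = exp (- lam * measure lborel Z)"
  using prob_count[OF assms, of 0] by simp

end

theorem mainTheorem6:
  fixes M :: "'w measure" and PP :: "'w \<Rightarrow> ('a::euclidean_space) set"
    and X :: "'w \<Rightarrow> 'a" and lam r :: real and S Z :: "'a set"
  assumes "lam > 0"
    and "poisson_pp M lam PP"
    and "S \<in> sets lborel" and "emeasure lborel S > 0" and "emeasure lborel S < \<infinity>"
    and "r > 0"
    and "uniform_selection M PP S X"
    and "Z \<in> sets lborel" and "emeasure lborel Z < \<infinity>" and "Z \<inter> S = {}"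
  shows "measure M {\<omega> \<in> space M. PP \<omega> \<inter> S \<noteq> {} \<and> r_isolated r (PP \<omega>) (X \<omega>)
                                     \<and> card (PP \<omega> \<inter> Z) = 0}
           / measure M {\<omega> \<in> space M. card (PP \<omega> \<inter> Z) = 0}
         \<ge> measure M {\<omega> \<in> space M. PP \<omega> \<inter> S \<noteq> {} \<and> r_isolated r (PP \<omega>) (X \<omega>)}"
proof -
  interpret ppp M lam PP using assms(2) by unfold_locales
  have Xm: "X \<in> borel_measurable M" using assms(7) unfolding uniform_selection_def by blast
  have XS: "\<And>\<omega>. \<omega> \<in> space M \<Longrightarrow> PP \<omega> \<inter> S \<noteq> {} \<Longrightarrow> X \<omega> \<in> PP \<omega> \<inter> S"
    using assms(7) unfolding uniform_selection_def by blast
  have US: "\<And>C A. C \<in> sets config_space \<Longrightarrow> A \<in> sets borel \<Longrightarrow>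
        measure M {\<omega> \<in> space M. PP \<omega> \<in> C \<and> PP \<omega> \<inter> S \<noteq> {} \<and> X \<omega> \<in> A}
        = (\<integral>\<omega>. indicator C (PP \<omega>) * real (card (PP \<omega> \<inter> S \<inter> A)) / real (card (PP \<omega> \<inter> S)) \<partial>M)"
    using assms(7) unfolding uniform_selection_def by blast
  have Sb: "S \<in> sets borel" using assms(3) by simp
  have Zb: "Z \<in> sets borel" using assms(8) by simp
  have Zf: "emeasure lborel Z < \<infinity>" by (rule assms(9))
  define A where "A = {\<omega> \<in> space M. PP \<omega> \<inter> S \<noteq> {} \<and> r_isolated r (PP \<omega>) (X \<omega>)}"
  define N where "N = {\<omega> \<in> space M. card (PP \<omega> \<inter> Z) = 0}"
  define AN where "AN = {\<omega> \<in> space M. PP \<omega> \<inter> S \<noteq> {} \<and> r_isolated r (PP \<omega>) (X \<omega>)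
                                     \<and> card (PP \<omega> \<inter> Z) = 0}"
  define H where "H = {\<omega> \<in> space M. PP \<omega> \<inter> S \<noteq> {}}"
  have N_ev: "N \<in> events" unfolding N_def using count_sets[OF Zb] by simp
  have pN: "prob N = exp (- lam * measure lborel Z)" unfolding N_def by (rule probN[OF Zb Zf])
  have pN_pos: "prob N > 0" unfolding pN by simp
  show ?thesis
  proof (cases "A \<in> events")
    case False
    then have "measure M A = 0" by (rule measure_notin_sets)
    then show ?thesis unfolding A_def[symmetric] AN_def[symmetric] N_def[symmetric] by simp
  next
    case True
    have Sm_pos: "measure lborel S > 0"
    proof -
      have "emeasure lborel S = ennreal (measure lborel S)"
        using assms(5) by (intro emeasure_eq_ennreal_measure) auto
      then show ?thesis using assms(4) by simp
    qed
    have H_ev: "H \<in> events"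
    proof (rule ccontr)
      assume Hn: "H \<notin> events"
      define E1 where "E1 = {\<omega> \<in> space M. card (PP \<omega> \<inter> S) \<noteq> 0}"
      define E0 where "E0 = {\<omega> \<in> space M. card (PP \<omega> \<inter> S) = 0}"
      have E0_ev: "E0 \<in> events" unfolding E0_def using count_sets[OF Sb] by simp
      have E1_eq: "E1 = space M - E0" unfolding E1_def E0_def by auto
      have topc: "UNIV \<in> sets (config_space :: 'a set measure)"
        using sets.top[of "config_space :: 'a set measure"] by simp
      have "measure M {\<omega> \<in> space M. PP \<omega> \<in> UNIV \<and> PP \<omega> \<inter> S \<noteq> {} \<and> X \<omega> \<in> UNIV}
        = (\<integral>\<omega>. indicator UNIV (PP \<omega>) * real (card (PP \<omega> \<inter> S \<inter> UNIV)) / real (card (PP \<omega> \<inter> S)) \<partial>M)"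
        by (rule US[OF topc]) simp
      also have "\<dots> = (\<integral>\<omega>. indicator E1 \<omega> \<partial>M)"
        by (intro Bochner_Integration.integral_cong) (auto simp: E1_def indicator_def)
      also have "\<dots> = prob E1" by (simp add: E1_def Int_absorb2)
      also have "\<dots> = 1 - prob E0" unfolding E1_eq using E0_ev by (simp add: prob_compl)
      also have "\<dots> = 1 - exp (- lam * measure lborel S)"
        unfolding E0_def using prob_count[OF Sb assms(5), of 0] by simp
      finally have eq: "measure M H = 1 - exp (- lam * measure lborel S)" unfolding H_def by simp
      have "lam * measure lborel S > 0" using assms(1) Sm_pos by simp
      then have "exp (- lam * measure lborel S) < 1" by simp
      then have "measure M H > 0" using eq by simp
      moreover have "measure M H = 0" using Hn by (rule measure_notin_sets)
      ultimately show False by simp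
    qed
    define Y where "Y = (\<lambda>\<omega>. PP \<omega> - Z)"
    define P where "P = (\<lambda>\<omega>. (Y \<omega>, X \<omega>))"
    have Pm: "P \<in> measurable M (cf \<Otimes>\<^sub>M borel)"
      unfolding P_def Y_def by (rule measurable_Pair[OF Y_meas[OF Zb] Xm])
    obtain DS where DS: "DS \<in> sets (cf \<Otimes>\<^sub>M (borel :: 'a measure))"
      "\<And>Q x. locfin Q \<Longrightarrow> ((Q,x) \<in> DS \<longleftrightarrow> r_isolated r Q x)"
      using iso_set_exists[of r] assms(6) by auto
    define T where "T = P -` DS \<inter> space M"
    have T_ev: "T \<in> events" unfolding T_def by (rule measurable_sets[OF Pm DS(1)])
    have locY: "locfin (Y \<omega>)" if "locfin (PP \<omega>)" for \<omega>
      using that unfolding locfin_def Y_def by (meson Diff_subset Int_mono finite_subset order_refl)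
    have rect: "prob (P -` (a \<times> b) \<inter> space M \<inter> (H \<inter> N)) = prob N * prob (P -` (a \<times> b) \<inter> space M \<inter> H)"
      if ab: "a \<in> sets cf" "b \<in> sets borel" for a b
    proof -
      define Cs where "Cs = (\<lambda>Q. Q - Z) -` a \<inter> {Q. card (Q \<inter> Z) = 0}"
      define C' where "C' = (\<lambda>Q. Q - Z) -` a"
      have C'_sets: "C' \<in> sets config_space"
        using measurable_sets[OF minus_measurable[OF Zb] ab(1)] unfolding C'_def by simp
      have Cs_sets: "Cs \<in> sets config_space"
        unfolding Cs_def using C'_sets config_basic[OF Zb, of 0] unfolding C'_def by (rule sets.Int)
      have e1: "P -` (a \<times> b) \<inter> space M \<inter> (H \<inter> N) = {\<omega> \<in> space M. PP \<omega> \<in> Cs \<and> PP \<omega> \<inter> S \<noteq> {} \<and> X \<omega> \<in> b}"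
        unfolding P_def Y_def H_def N_def Cs_def by auto
      have e2: "P -` (a \<times> b) \<inter> space M \<inter> H = {\<omega> \<in> space M. PP \<omega> \<in> C' \<and> PP \<omega> \<inter> S \<noteq> {} \<and> X \<omega> \<in> b}"
        unfolding P_def Y_def H_def C'_def by auto
      define psi where "psi Q = indicator a Q * real (card (Q \<inter> (S \<inter> b))) / real (card (Q \<inter> S))" for Q :: "'a set"
      define phi where "phi k = (indicator {0} k :: real)" for k :: nat
      have SZ: "(Q - Z) \<inter> S = Q \<inter> S" for Q using assms(10) by blast
      have SZA: "(Q - Z) \<inter> (S \<inter> b) = Q \<inter> S \<inter> b" for Q using assms(10) by blast
      have Sbf: "emeasure lborel (S \<inter> b) < \<infinity>"
      proof -
        have "emeasure lborel (S \<inter> b) \<le> emeasure lborel S" using Sb ab(2) by (intro emeasure_mono) auto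
        then show ?thesis using assms(5) by (meson order.strict_trans1)
      qed
      have m1[measurable]: "(\<lambda>Q. card (Q \<inter> (S \<inter> b))) \<in> measurable cf (count_space UNIV)"
        using Sb ab(2) Sbf by (intro cf_card_measurable) auto
      have m2[measurable]: "(\<lambda>Q. card (Q \<inter> S)) \<in> measurable cf (count_space UNIV)"
        using Sb assms(5) by (intro cf_card_measurable) auto
      have m3[measurable]: "a \<in> sets cf" by (rule ab(1))
      have psim: "psi \<in> borel_measurable cf" unfolding psi_def by measurable
      have psi_b: "norm (psi Q) \<le> 1" for Q
      proof -
        have "0 \<le> psi Q" unfolding psi_def by simp
        moreover have "psi Q \<le> 1"
          unfolding psi_def using ratio_le1[of Q S b] by (simp add: indicator_def)
        ultimately show ?thesis by simp
      qed
      have phi_b: "norm (phi k) \<le> 1" for k unfolding phi_def by (simp add: indicator_def)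
      have int1: "integrable M (\<lambda>\<omega>. psi (PP \<omega> - Z))"
        by (rule integrable_const_bound[where B=1]) (use psi_b in \<open>auto intro: measurable_compose[OF Y_meas[OF Zb] psim]\<close>)
      have int2: "integrable M (\<lambda>\<omega>. phi (card (PP \<omega> \<inter> Z)))"
        by (rule integrable_const_bound[where B=1])
           (use phi_b in \<open>auto intro: measurable_compose[OF count_meas[OF Zb] borel_measurable_count_space]\<close>)
      have ind: "indep_var borel (\<lambda>\<omega>. psi (PP \<omega> - Z)) borel (\<lambda>\<omega>. phi (card (PP \<omega> \<inter> Z)))"
        by (rule indep_real[OF Zb Zf psim])
      have "prob (P -` (a \<times> b) \<inter> space M \<inter> (H \<inter> N))
          = (\<integral>\<omega>. indicator Cs (PP \<omega>) * real (card (PP \<omega> \<inter> S \<inter> b)) / real (card (PP \<omega> \<inter> S)) \<partial>M)"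
        unfolding e1 by (rule US[OF Cs_sets ab(2)])
      also have "\<dots> = (\<integral>\<omega>. psi (PP \<omega> - Z) * phi (card (PP \<omega> \<inter> Z)) \<partial>M)"
        by (intro Bochner_Integration.integral_cong)
           (auto simp: psi_def phi_def Cs_def indicator_def SZ SZA Int_assoc)
      also have "\<dots> = (\<integral>\<omega>. psi (PP \<omega> - Z) \<partial>M) * (\<integral>\<omega>. phi (card (PP \<omega> \<inter> Z)) \<partial>M)"
        by (rule indep_var_lebesgue_integral[OF ind int1 int2])
      also have "(\<integral>\<omega>. phi (card (PP \<omega> \<inter> Z)) \<partial>M) = prob N"
      proof -
        have "(\<integral>\<omega>. phi (card (PP \<omega> \<inter> Z)) \<partial>M) = (\<integral>\<omega>. indicator N \<omega> \<partial>M)"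
          by (intro Bochner_Integration.integral_cong) (auto simp: phi_def N_def indicator_def)
        also have "\<dots> = prob N" by (simp add: N_def Int_absorb2)
        finally show ?thesis .
      qed
      also have "(\<integral>\<omega>. psi (PP \<omega> - Z) \<partial>M)
          = (\<integral>\<omega>. indicator C' (PP \<omega>) * real (card (PP \<omega> \<inter> S \<inter> b)) / real (card (PP \<omega> \<inter> S)) \<partial>M)"
        by (intro Bochner_Integration.integral_cong)
           (auto simp: psi_def C'_def indicator_def SZ SZA Int_assoc)
      also have "\<dots> = prob (P -` (a \<times> b) \<inter> space M \<inter> H)"
        unfolding e2 by (rule US[OF C'_sets ab(2), symmetric])
      finally show ?thesis by simp
    qed
    have key: "prob (T \<inter> (H \<inter> N)) = prob N * prob (T \<inter> H)"
      unfolding T_def using H_ev N_ev by (intro pair_extend[OF Pm _ H_ev rect DS(1)]) auto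
    have AN_eq: "prob AN = prob (T \<inter> (H \<inter> N))"
    proof (rule measure_eq_AE)
      have "AN = A \<inter> N" unfolding AN_def A_def N_def by blast
      then show "AN \<in> events" using True N_ev by simp
      show "T \<inter> (H \<inter> N) \<in> events" using T_ev H_ev N_ev by auto
      show "AE \<omega> in M. \<omega> \<in> AN \<longleftrightarrow> \<omega> \<in> T \<inter> (H \<inter> N)"
        using AE_locfin fin_AE[OF Zb Zf]
      proof eventually_elim
        case (elim \<omega>)
        show ?case
        proof (cases "\<omega> \<in> space M \<and> card (PP \<omega> \<inter> Z) = 0")
          case True
          then have "PP \<omega> \<inter> Z = {}" using elim(2) by simp
          then have YP: "Y \<omega> = PP \<omega>" unfolding Y_def by blast
          have "\<omega> \<in> T \<longleftrightarrow> r_isolated r (PP \<omega>) (X \<omega>)"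
            unfolding T_def P_def using True DS(2)[OF elim(1)] YP by simp
          then show ?thesis using True unfolding AN_def H_def N_def by auto
        next
          case False
          then show ?thesis unfolding AN_def N_def by auto
        qed
      qed
    qed
    have A_le: "prob A \<le> prob (T \<inter> H)"
    proof (rule finite_measure_mono_AE)
      show "T \<inter> H \<in> events" using T_ev H_ev by auto
      show "AE \<omega> in M. \<omega> \<in> A \<longrightarrow> \<omega> \<in> T \<inter> H"
        using AE_locfin
      proof eventually_elim
        case (elim \<omega>)
        show ?case
        proof
          assume a: "\<omega> \<in> A"
          then have sp: "\<omega> \<in> space M" and h: "PP \<omega> \<inter> S \<noteq> {}" and iso: "r_isolated r (PP \<omega>) (X \<omega>)"
            unfolding A_def by auto
          have "X \<omega> \<in> S" using XS[OF sp h] by blast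
          then have "X \<omega> \<notin> Z" using assms(10) by blast
          have "r_isolated r (Y \<omega>) (X \<omega>)"
            using iso \<open>X \<omega> \<notin> Z\<close> unfolding r_isolated_def Y_def by auto
          then have "(Y \<omega>, X \<omega>) \<in> DS" using DS(2)[OF locY[OF elim]] by simp
          then show "\<omega> \<in> T \<inter> H" unfolding T_def P_def H_def using sp h by simp
        qed
      qed
    qed
    have "prob A * prob N \<le> prob (T \<inter> H) * prob N"
      using A_le by (rule mult_right_mono) simp
    also have "\<dots> = prob AN" using AN_eq key by simp
    finally have "prob AN \<ge> prob A * prob N" .
    then show ?thesis unfolding A_def[symmetric] AN_def[symmetric] N_def[symmetric]
      using pN_pos by (simp add: pos_le_divide_eq)
  qed
qed

end
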